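(* For all $n,m\ge1$, $c_n\,c_m\le c_{n+m}$. More precisely, the map $\mathcal C_n(321)\times\mathcal C_m(321)\to\mathcal C_{n+m}(321)$, $(\tau,\sigma)\mapsto\theta^{-1}(\hat\tau\odot\hat\sigma)$, is injective.
   Context: Permutations are written in one-line notation. A permutation contains $321$ if there are $i<j<k$ with $\pi_i>\pi_j>\pi_k$. $\mathcal C_n$ is the set of cyclic permutations of $[n]$, $\mathcal C_n(321)$ those avoiding $321$, and $c_n=|\mathcal C_n(321)|$. The standard cycle notation of $\pi$ writes each cycle with its largest element first, as $(m,\pi(m),\pi^2(m),\dots)$, and lists cycles in increasing order of their largest elements. $\theta:S_n\to S_n$ erases the parentheses of the standard cycle notation to give a one-line word; $\hat\pi=\theta(\pi)$. For $\sigma\in\mathcal C_n(321)$, $\tau\in\mathcal C_m(321)$ and $k$ with $\hat\tau_k=1$: $\hat\tau\odot\hat\sigma=(\hat\tau_1+n)\cdots(\hat\tau_k+n)\,\hat\sigma_1\cdots\hat\sigma_n\,(\hat\tau_{k+1}+n)\cdots(\hat\tau_m+n)$; it is known (and may be used) that $\theta^{-1}(\hat\tau\odot\hat\sigma)\in\mathcal C_{n+m}(321)$. *)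

theory Defs
  imports Main
begin

text \<open>Permutations of [n] in one-line notation, as lists w with w!(i-1) = pi(i).\<close>

definition perms :: "nat \<Rightarrow> nat list set" where
  "perms n = {w. length w = n \<and> distinct w \<and> set w = {1..n}}"

definition papp :: "nat list \<Rightarrow> nat \<Rightarrow> nat" where
  "papp w i = (if 1 \<le> i \<and> i \<le> length w then w ! (i - 1) else i)"

definition contains321 :: "nat list \<Rightarrow> bool" where
  "contains321 w = (\<exists>i j k. i < j \<and> j < k \<and> k < length w \<and> w ! i > w ! j \<and> w ! j > w ! k)"

definition cyclic :: "nat list \<Rightarrow> bool" where
  "cyclic w = (\<forall>i \<in> {1..length w}. \<exists>k. (papp w ^^ k) (length w) = i)"

definition Cyc :: "nat \<Rightarrow> nat list set" where
  "Cyc n = {w \<in> perms n. cyclic w}"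

definition Cyc321 :: "nat \<Rightarrow> nat list set" where
  "Cyc321 n = {w \<in> Cyc n. \<not> contains321 w}"

definition cnum :: "nat \<Rightarrow> nat" where
  "cnum n = card (Cyc321 n)"

definition cyc_len :: "nat list \<Rightarrow> nat \<Rightarrow> nat" where
  "cyc_len w m = (LEAST k. 0 < k \<and> (papp w ^^ k) m = m)"

definition cyc_word :: "nat list \<Rightarrow> nat \<Rightarrow> nat list" where
  "cyc_word w m = map (\<lambda>k. (papp w ^^ k) m) [0..<cyc_len w m]"

definition is_cyc_max :: "nat list \<Rightarrow> nat \<Rightarrow> bool" where
  "is_cyc_max w m = (\<forall>k. (papp w ^^ k) m \<le> m)"

definition theta :: "nat list \<Rightarrow> nat list" where
  "theta w = concat (map (cyc_word w) (filter (is_cyc_max w) [1..<Suc (length w)]))"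

definition theta_inv :: "nat \<Rightarrow> nat list \<Rightarrow> nat list" where
  "theta_inv n u = the_inv_into (perms n) theta u"

text \<open>The operation tau-hat odot sigma-hat, with k the (1-based) position of 1 in tau-hat.\<close>
definition odot :: "nat list \<Rightarrow> nat list \<Rightarrow> nat list" where
  "odot th sh = (let k = Suc (LEAST i. i < length th \<and> th ! i = 1); n = length sh
     in map (\<lambda>x. x + n) (take k th) @ sh @ map (\<lambda>x. x + n) (drop k th))"

end

theory Submission imports Defs begin

lemma perms_nth: "p \<in> perms N \<Longrightarrow> i < N \<Longrightarrow> p ! i \<in> {1..N}"
  unfolding perms_def by (metis (mono_tags, lifting) mem_Collect_eq nth_mem)

lemma papp_in: assumes "p \<in> perms N" "x \<in> {1..N}" shows "papp p x \<in> {1..N}"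
proof -
  have "length p = N" using assms(1) by (simp add: perms_def)
  then show ?thesis using assms perms_nth[OF assms(1), of "x - 1"] by (auto simp: papp_def)
qed

lemma papp_inj: assumes "p \<in> perms N" shows "inj (papp p)"
proof (rule injI)
  fix x y assume e: "papp p x = papp p y"
  have L: "length p = N" "distinct p" using assms by (auto simp: perms_def)
  show "x = y"
  proof (cases "x \<in> {1..N}"; cases "y \<in> {1..N}")
    assume "x \<in> {1..N}" "y \<in> {1..N}"
    then show ?thesis using e L by (auto simp: papp_def nth_eq_iff_index_eq)
  next
    assume a: "x \<in> {1..N}" "y \<notin> {1..N}"
    then show ?thesis using e L papp_in[OF assms a(1)] by (auto simp: papp_def)
  next
    assume a: "x \<notin> {1..N}" "y \<in> {1..N}"
    then show ?thesis using e L papp_in[OF assms a(2)] by (auto simp: papp_def)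
  next
    assume a: "x \<notin> {1..N}" "y \<notin> {1..N}"
    then show ?thesis using e L by (auto simp: papp_def)
  qed
qed

lemma funpow_in: assumes "p \<in> perms N" "x \<in> {1..N}" shows "(papp p ^^ i) x \<in> {1..N}"
  by (induction i) (use assms papp_in in auto)

lemma funpow_fix_mult: "(f ^^ d) x = x \<Longrightarrow> (f ^^ (d * q)) x = x"
proof (induction q)
  case 0 then show ?case by simp
next
  case (Suc q)
  have "(f ^^ (d * Suc q)) x = (f ^^ d) ((f ^^ (d * q)) x)" by (simp add: funpow_add)
  then show ?case using Suc by simp
qed

lemma funpow_mod: assumes "(f ^^ d) x = x" shows "(f ^^ t) x = (f ^^ (t mod d)) x"
proof -
  have "t = t mod d + d * (t div d)" by simp
  then have "(f ^^ t) x = (f ^^ (t mod d)) ((f ^^ (d * (t div d))) x)"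
    by (metis comp_apply funpow_add)
  then show ?thesis using funpow_fix_mult[OF assms] by simp
qed

lemma periodic: assumes "p \<in> perms N" "x \<in> {1..N}"
  shows "\<exists>k>0. (papp p ^^ k) x = x"
proof -
  let ?f = "papp p"
  have "\<not> inj_on (\<lambda>i. (?f ^^ i) x) {..N}"
  proof
    assume "inj_on (\<lambda>i. (?f ^^ i) x) {..N}"
    moreover have "(\<lambda>i. (?f ^^ i) x) ` {..N} \<subseteq> {1..N}" using funpow_in[OF assms] by auto
    ultimately have "card {..N} \<le> card {1..N}" by (metis card_inj_on_le finite_atLeastAtMost)
    then show False by simp
  qed
  then obtain i j where ij: "i \<le> N" "j \<le> N" "i \<noteq> j" "(?f ^^ i) x = (?f ^^ j) x"
    unfolding inj_on_def by auto
  have "\<exists>i j. i < j \<and> (?f ^^ i) x = (?f ^^ j) x" using ij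
    by (metis linorder_neqE_nat)
  then obtain i j where ij2: "i < j" "(?f ^^ i) x = (?f ^^ j) x" by blast
  have "(?f ^^ j) x = (?f ^^ i) ((?f ^^ (j - i)) x)" using ij2(1)
    by (metis comp_apply funpow_add le_add_diff_inverse less_imp_le)
  then have "(?f ^^ i) ((?f ^^ (j - i)) x) = (?f ^^ i) x" using ij2 by simp
  then have "(?f ^^ (j - i)) x = x" using inj_fn[OF papp_inj[OF assms(1)], of i]
    by (meson injD)
  then show ?thesis using ij2 by (intro exI[of _ "j - i"]) auto
qed


lemma orbit_main:
  assumes p: "p \<in> perms N" and N: "1 \<le> N"
    and D: "inj_on (\<lambda>i. (papp p ^^ i) N) {..<N}"
  shows "(papp p ^^ N) N = N"
    and "(\<lambda>i. (papp p ^^ i) N) ` {..<N} = {1..N}"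
    and "cyclic p"
    and "theta p = map (\<lambda>i. (papp p ^^ i) N) [0..<N]"
proof -
  let ?f = "papp p"
  have len: "length p = N" using p by (simp add: perms_def)
  have NN: "N \<in> {1..N}" using N by simp
  have sub: "(\<lambda>i. (?f ^^ i) N) ` {..<N} \<subseteq> {1..N}" using funpow_in[OF p NN] by auto
  have "card ((\<lambda>i. (?f ^^ i) N) ` {..<N}) = N" using card_image[OF D] by simp
  then show S: "(\<lambda>i. (?f ^^ i) N) ` {..<N} = {1..N}"
    using sub by (simp add: card_subset_eq)
  have "(?f ^^ N) N \<in> {1..N}" using funpow_in[OF p NN] .
  then have "(?f ^^ N) N \<in> (\<lambda>i. (?f ^^ i) N) ` {..<N}" by (simp only: S)
  then obtain j where j1: "(?f ^^ N) N = (?f ^^ j) N" "j \<in> {..<N}" by (rule imageE)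
  have j: "j < N" "(?f ^^ N) N = (?f ^^ j) N" using j1(2) apply simp by (rule j1(1))
  show FN: "(?f ^^ N) N = N"
  proof (cases j)
    case 0 then show ?thesis using j by simp
  next
    case (Suc j')
    have a: "(?f ^^ N) N = ?f ((?f ^^ (N - 1)) N)" using N
      by (metis Suc_diff_1 funpow.simps(2) o_apply less_le_trans zero_less_one)
    have b: "(?f ^^ j) N = ?f ((?f ^^ j') N)" using Suc by simp
    have "(?f ^^ (N - 1)) N = (?f ^^ j') N" using a b j papp_inj[OF p] by (metis injD)
    then have "N - 1 = j'" using D j Suc by (auto simp: inj_on_def)
    then show ?thesis using j Suc by simp
  qed
  show "cyclic p" unfolding cyclic_def len using S by (metis imageE)
  have filt: "filter (is_cyc_max p) [1..<Suc N] = [N]"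
  proof -
    have m1: "is_cyc_max p N" unfolding is_cyc_max_def using funpow_in[OF p NN] by auto
    have m2: "\<not> is_cyc_max p x" if x: "x \<in> set [1..<N]" for x
    proof -
      have "x \<in> {1..N}" using x by auto
      then have "x \<in> (\<lambda>i. (?f ^^ i) N) ` {..<N}" by (simp only: S)
      then obtain i where i1: "x = (?f ^^ i) N" "i \<in> {..<N}" by (rule imageE)
      have i: "i < N" "x = (?f ^^ i) N" using i1(2) apply simp by (rule i1(1))
      have "(?f ^^ (N - i)) x = (?f ^^ N) N" using i
        by (metis comp_apply funpow_add le_add_diff_inverse2 less_imp_le)
      then have "(?f ^^ (N - i)) x = N" using FN by simp
      then show ?thesis unfolding is_cyc_max_def using x by (metis atLeastLessThan_iff not_le set_upt)
    qed
    have e1: "filter (is_cyc_max p) [1..<N] = []" by (rule filter_False, rule ballI, rule m2)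
    have "[1..<Suc N] = [1..<N] @ [N]" using N by simp
    then show ?thesis using m1 e1 by (simp only: filter_append) simp
  qed
  have cl: "cyc_len p N = N" unfolding cyc_len_def
  proof (rule Least_equality)
    show "0 < N \<and> (?f ^^ N) N = N" using N FN by simp
    fix y assume y: "0 < y \<and> (?f ^^ y) N = N"
    show "N \<le> y"
    proof (rule ccontr)
      assume "\<not> N \<le> y"
      then have "y < N" by simp
      have e: "(\<lambda>i. (?f ^^ i) N) y = (\<lambda>i. (?f ^^ i) N) 0" using y by simp
      have "y = 0" by (rule inj_onD[OF D e]) (use \<open>y < N\<close> N in auto)
      then show False using y by simp
    qed
  qed
  show "theta p = map (\<lambda>i. (papp p ^^ i) N) [0..<N]"
    unfolding theta_def len filt using cl by (simp add: cyc_word_def)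
qed

lemma cyc_inj:
  assumes p: "p \<in> Cyc N" and N: "1 \<le> N"
  shows "inj_on (\<lambda>i. (papp p ^^ i) N) {..<N}"
proof (rule ccontr)
  let ?f = "papp p"
  assume "\<not> ?thesis"
  then obtain i j where ij0: "i < N" "j < N" "i \<noteq> j" "(?f ^^ i) N = (?f ^^ j) N"
    unfolding inj_on_def by auto
  have "\<exists>i j. i < j \<and> j < N \<and> (?f ^^ i) N = (?f ^^ j) N" using ij0
    by (metis linorder_neqE_nat)
  then obtain i j where ij: "i < j" "j < N" "(?f ^^ i) N = (?f ^^ j) N" by blast
  have pp: "p \<in> perms N" and cy: "cyclic p" using p by (auto simp: Cyc_def)
  have len: "length p = N" using pp by (simp add: perms_def)
  have "(?f ^^ j) N = (?f ^^ i) ((?f ^^ (j - i)) N)" using ij(1)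
    by (metis comp_apply funpow_add le_add_diff_inverse less_imp_le)
  then have "(?f ^^ i) ((?f ^^ (j - i)) N) = (?f ^^ i) N" using ij by simp
  then have d: "(?f ^^ (j - i)) N = N" using inj_fn[OF papp_inj[OF pp], of i]
    by (meson injD)
  have "{1..N} \<subseteq> (\<lambda>t. (?f ^^ t) N) ` {..<j - i}"
  proof
    fix x assume x: "x \<in> {1..N}"
    then obtain k where "(?f ^^ k) N = x" using cy len unfolding cyclic_def by blast
    then have "(?f ^^ (k mod (j - i))) N = x" using funpow_mod[OF d, of k] by simp
    moreover have "k mod (j - i) < j - i" using ij by simp
    ultimately show "x \<in> (\<lambda>t. (?f ^^ t) N) ` {..<j - i}" by blast
  qed
  then have "card {1..N} \<le> card ((\<lambda>t. (?f ^^ t) N) ` {..<j - i})"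
    by (intro card_mono) auto
  also have "\<dots> \<le> card {..<j - i}" by (rule card_image_le) simp
  finally show False using ij by simp
qed

lemma theta_start:
  assumes p: "p \<in> perms N" and N: "1 \<le> N" and w: "theta p = w" "length w = N" "w ! 0 = N"
  shows "\<forall>i<N. (papp p ^^ i) N = w ! i"
proof -
  let ?f = "papp p"
  let ?L = "filter (is_cyc_max p) [1..<Suc N]"
  have len: "length p = N" using p by (simp add: perms_def)
  have cw: "cyc_word p x \<noteq> [] \<and> hd (cyc_word p x) = x" if x: "x \<in> {1..N}" for x
  proof -
    have "\<exists>k. 0 < k \<and> (?f ^^ k) x = x" using periodic[OF p x] by auto
    then have "0 < cyc_len p x" unfolding cyc_len_def by (metis (mono_tags, lifting) LeastI_ex)
    then show ?thesis unfolding cyc_word_def by (simp add: hd_map upt_conv_Cons)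
  qed
  have setL: "set ?L \<subseteq> {1..N}" by auto
  have thL: "theta p = concat (map (cyc_word p) ?L)" unfolding theta_def len ..
  have "?L \<noteq> []"
  proof
    assume "?L = []"
    then have "theta p = []" using thL by simp
    then show False using w N by simp
  qed
  then obtain x rest where xr: "?L = x # rest" by (meson neq_Nil_conv)
  have "x \<in> set ?L" using xr by simp
  then have x: "x \<in> {1..N}" by auto
  have "theta p = cyc_word p x @ concat (map (cyc_word p) rest)" using thL xr by simp
  then have "w ! 0 = x" using cw[OF x] w(1)
    by (metis hd_append2 hd_conv_nth list.size(3) not_gr_zero length_greater_0_conv nth_append)
  then have xN: "x = N" using w by simp
  have "[1..<Suc N] = [1..<N] @ [N]" using N by simp
  then have eq: "?L = filter (is_cyc_max p) [1..<N] @ filter (is_cyc_max p) [N]" by simp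
  have "filter (is_cyc_max p) [1..<N] = []"
  proof (rule ccontr)
    assume ne: "filter (is_cyc_max p) [1..<N] \<noteq> []"
    then have "hd (filter (is_cyc_max p) [1..<N]) \<in> set [1..<N]"
      using hd_in_set[OF ne] by auto
    moreover have "hd (filter (is_cyc_max p) [1..<N]) = x" using eq xr ne by (cases "filter (is_cyc_max p) [1..<N]") auto
    ultimately show False using xN by simp
  qed
  then have "?L = [N]" using eq xr xN by (auto split: if_splits)
  then have "w = cyc_word p N" using thL w by simp
  then show ?thesis using w unfolding cyc_word_def by auto
qed

lemma determined:
  assumes p: "p \<in> perms N" and q: "q \<in> perms N" and N: "1 \<le> N"
    and D: "inj_on (\<lambda>i. (papp p ^^ i) N) {..<N}"
    and E: "\<forall>i<N. (papp p ^^ i) N = (papp q ^^ i) N"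
  shows "p = q"
proof -
  have Dq: "inj_on (\<lambda>i. (papp q ^^ i) N) {..<N}" using D E unfolding inj_on_def by simp
  have Fp: "(papp p ^^ N) N = N" using orbit_main(1)[OF p N D] .
  have Fq: "(papp q ^^ N) N = N" using orbit_main(1)[OF q N Dq] .
  have all: "(papp p ^^ t) N = (papp q ^^ t) N" for t
    using funpow_mod[OF Fp, of t] funpow_mod[OF Fq, of t] E N by simp
  have pq: "papp p x = papp q x" if x: "x \<in> {1..N}" for x
  proof -
    have "x \<in> (\<lambda>i. (papp p ^^ i) N) ` {..<N}" using orbit_main(2)[OF p N D] x by (simp only:)
    then obtain j where j1: "x = (papp p ^^ j) N" "j \<in> {..<N}" by (rule imageE)
    have j: "j < N" "x = (papp p ^^ j) N" using j1(2) apply simp by (rule j1(1))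
    have "papp p x = (papp p ^^ Suc j) N" using j by simp
    also have "\<dots> = (papp q ^^ Suc j) N" by (rule all)
    also have "\<dots> = papp q x" using j all[of j] by simp
    finally show ?thesis .
  qed
  have lp: "length p = N" and lq: "length q = N" using p q by (auto simp: perms_def)
  show ?thesis
  proof (rule nth_equalityI)
    show "length p = length q" using lp lq by simp
    fix i assume i: "i < length p"
    have "papp p (Suc i) = papp q (Suc i)" using pq[of "Suc i"] i lp by simp
    then show "p ! i = q ! i" using i lp lq by (simp add: papp_def)
  qed
qed


lemma avoid:
  assumes s: "\<sigma> \<in> perms n" and t: "\<tau> \<in> perms m" and ns: "\<not> contains321 \<sigma>"
    and nt: "\<not> contains321 \<tau>" and n: "1 \<le> n" and lp: "length P = n + m"
    and P1: "\<forall>i<n. P ! i = (if \<sigma> ! i = n then \<tau> ! 0 + n else \<sigma> ! i)"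
    and P2: "\<forall>i. n \<le> i \<and> i < n + m \<longrightarrow> P ! i = (if i = n then n else \<tau> ! (i - n) + n)"
  shows "\<not> contains321 P"
proof
  assume "contains321 P"
  then obtain i j k where ijk: "i < j" "j < k" "k < n + m" "P ! i > P ! j" "P ! j > P ! k"
    unfolding contains321_def lp by blast
  have sr: "1 \<le> \<sigma> ! x \<and> \<sigma> ! x \<le> n" if "x < n" for x using perms_nth[OF s that] by auto
  have sd: "x = y" if "x < n" "y < n" "\<sigma> ! x = \<sigma> ! y" for x y
    using s that unfolding perms_def by (auto simp: nth_eq_iff_index_eq)
  have tr: "1 \<le> \<tau> ! x \<and> \<tau> ! x \<le> m" if "x < m" for x using perms_nth[OF t that] by auto
  have ls: "length \<sigma> = n" using s by (simp add: perms_def)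
  have lt: "length \<tau> = m" using t by (simp add: perms_def)
  have ns': "\<not> (\<sigma> ! a > \<sigma> ! b \<and> \<sigma> ! b > \<sigma> ! c)" if "a < b" "b < c" "c < n" for a b c
    using ns that ls unfolding contains321_def by blast
  have nt': "\<not> (\<tau> ! a > \<tau> ! b \<and> \<tau> ! b > \<tau> ! c)" if "a < b" "b < c" "c < m" for a b c
    using nt that lt unfolding contains321_def by blast
  show False
  proof (cases "k < n")
    case True
    then have lt3: "i < n" "j < n" "k < n" using ijk by auto
    have vi: "P ! i = (if \<sigma> ! i = n then \<tau> ! 0 + n else \<sigma> ! i)" using P1 lt3 by blast
    have vj: "P ! j = (if \<sigma> ! j = n then \<tau> ! 0 + n else \<sigma> ! j)" using P1 lt3 by blast
    have vk: "P ! k = (if \<sigma> ! k = n then \<tau> ! 0 + n else \<sigma> ! k)" using P1 lt3 by blast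
    have ri: "1 \<le> \<sigma> ! i \<and> \<sigma> ! i \<le> n" "1 \<le> \<sigma> ! j \<and> \<sigma> ! j \<le> n" "1 \<le> \<sigma> ! k \<and> \<sigma> ! k \<le> n"
      using sr lt3 by auto
    have d: "\<sigma> ! i \<noteq> \<sigma> ! j" "\<sigma> ! j \<noteq> \<sigma> ! k" "\<sigma> ! i \<noteq> \<sigma> ! k"
      using sd lt3 ijk by (metis less_irrefl less_trans)+
    have "\<not> (\<sigma> ! i > \<sigma> ! j \<and> \<sigma> ! j > \<sigma> ! k)" using ns' ijk lt3 by blast
    then show False using vi vj vk ri d ijk(4,5) by (auto split: if_splits)
  next
    case False
    then have kn: "n \<le> k" by simp
    have vk: "P ! k = (if k = n then n else \<tau> ! (k - n) + n)" using P2 kn ijk by blast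
    show False
    proof (cases "j < n")
      case True
      have vj: "P ! j = (if \<sigma> ! j = n then \<tau> ! 0 + n else \<sigma> ! j)" using P1 True by blast
      have vi: "P ! i = (if \<sigma> ! i = n then \<tau> ! 0 + n else \<sigma> ! i)" using P1 True ijk by auto
      have "\<sigma> ! i \<noteq> \<sigma> ! j" using sd True ijk by (metis less_irrefl less_trans)
      moreover have "\<sigma> ! i \<le> n" "\<sigma> ! j \<le> n" using sr True ijk by auto
      ultimately show False using vi vj vk ijk(4,5) by (auto split: if_splits)
    next
      case False
      then have jn: "n \<le> j" by simp
      have kn1: "k \<noteq> n" using jn ijk by auto
      have vj: "P ! j = (if j = n then n else \<tau> ! (j - n) + n)" using P2 jn ijk by auto
      show False
      proof (cases "i < n")
        case True
        have vi: "P ! i = (if \<sigma> ! i = n then \<tau> ! 0 + n else \<sigma> ! i)" using P1 True by blast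
        have "\<sigma> ! i \<le> n" using sr True by auto
        then have jn1: "j \<noteq> n" and si: "\<sigma> ! i = n"
          using vi vj vk kn1 ijk(4,5) by (auto split: if_splits)
        have "\<not> (\<tau> ! 0 > \<tau> ! (j - n) \<and> \<tau> ! (j - n) > \<tau> ! (k - n))"
          using nt'[of 0 "j - n" "k - n"] jn jn1 ijk by auto
        then show False using vi vj vk kn1 jn1 si ijk(4,5) by auto
      next
        case False
        then have iN: "n \<le> i" by simp
        have vi: "P ! i = (if i = n then n else \<tau> ! (i - n) + n)" using P2 iN ijk by auto
        have "1 \<le> \<tau> ! (j - n)" using tr[of "j - n"] ijk jn by auto
        then have in1: "i \<noteq> n" using vi vj ijk(1,4) by (auto split: if_splits)
        have "\<not> (\<tau> ! (i - n) > \<tau> ! (j - n) \<and> \<tau> ! (j - n) > \<tau> ! (k - n))"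
          using nt'[of "i - n" "j - n" "k - n"] iN ijk by auto
        moreover have "j \<noteq> n" using iN ijk by auto
        ultimately show False using vi vj vk kn1 in1 ijk by auto
      qed
    qed
  qed
qed


lemma cyc_facts:
  assumes p: "p \<in> Cyc N" and N: "1 \<le> N"
  shows "theta p = map (\<lambda>i. (papp p ^^ i) N) [0..<N]" "(papp p ^^ N) N = N"
    "distinct (theta p)" "set (theta p) = {1..N}" "length (theta p) = N"
proof -
  have pp: "p \<in> perms N" using p by (simp add: Cyc_def)
  have D: "inj_on (\<lambda>i. (papp p ^^ i) N) {..<N}" by (rule cyc_inj[OF p N])
  show th: "theta p = map (\<lambda>i. (papp p ^^ i) N) [0..<N]" by (rule orbit_main(4)[OF pp N D])
  show "(papp p ^^ N) N = N" by (rule orbit_main(1)[OF pp N D])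
  show "distinct (theta p)" unfolding th using D by (simp add: distinct_map atLeast0LessThan)
  show "set (theta p) = {1..N}" unfolding th using orbit_main(2)[OF pp N D] by (simp add: atLeast0LessThan)
  show "length (theta p) = N" unfolding th by simp
qed

lemma shift_union: "(\<lambda>x. x + n) ` {1..m} \<union> {1..n} = {1..n + (m::nat)}"
proof -
  have "x \<in> (\<lambda>x. x + n) ` {1..m}" if "n < x" "x \<le> n + m" for x
    using that by (intro image_eqI[of _ _ "x - n"]) auto
  then show ?thesis by force
qed


lemma construct:
  assumes n: "1 \<le> n" and m: "1 \<le> m" and tau: "\<tau> \<in> Cyc321 m" and sig: "\<sigma> \<in> Cyc321 n"
  shows "\<exists>P. P \<in> Cyc321 (n + m) \<and> theta P = odot (theta \<tau>) (theta \<sigma>)"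
proof -
  define N where "N = n + m"
  define g where "g = papp \<tau>"
  define h where "h = papp \<sigma>"
  define a where "a = theta \<tau>"
  define b where "b = theta \<sigma>"
  have tc: "\<tau> \<in> Cyc m" "\<tau> \<in> perms m" "\<not> contains321 \<tau>" using tau by (auto simp: Cyc321_def Cyc_def)
  have sc: "\<sigma> \<in> Cyc n" "\<sigma> \<in> perms n" "\<not> contains321 \<sigma>" using sig by (auto simp: Cyc321_def Cyc_def)
  have lt: "length \<tau> = m" using tc(2) by (simp add: perms_def)
  have ls: "length \<sigma> = n" using sc(2) by (simp add: perms_def)
  note fa = cyc_facts[OF tc(1) m, folded a_def g_def]
  note fb = cyc_facts[OF sc(1) n, folded b_def h_def]
  have la: "length a = m" and lb: "length b = n" using fa fb by auto
  have ai: "a ! i = (g ^^ i) m" if "i < m" for i using fa(1) that by simp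
  have bi: "b ! i = (h ^^ i) n" if "i < n" for i using fb(1) that by simp
  have ar: "1 \<le> a ! i \<and> a ! i \<le> m" if "i < m" for i using fa(4) la that
    by (metis atLeastAtMost_iff nth_mem)
  have br: "1 \<le> b ! i \<and> b ! i \<le> n" if "i < n" for i using fb(4) lb that
    by (metis atLeastAtMost_iff nth_mem)
  have a0: "a ! 0 = m" using ai[of 0] m by simp
  have b0: "b ! 0 = n" using bi[of 0] n by simp
  have gsuc: "g (a ! i) = a ! Suc i" if "Suc i < m" for i using ai that by simp
  have glast: "g (a ! (m - 1)) = m" using ai[of "m - 1"] m fa(2)
    by (metis Suc_diff_1 funpow.simps(2) o_apply diff_less less_numeral_extra(1) less_le_trans)
  have hsuc: "h (b ! i) = b ! Suc i" if "Suc i < n" for i using bi that by simp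
  have hlast: "h (b ! (n - 1)) = n" using bi[of "n - 1"] n fb(2)
    by (metis Suc_diff_1 funpow.simps(2) o_apply diff_less less_numeral_extra(1) less_le_trans)
  have bd: "b ! i = b ! j \<Longrightarrow> i < n \<Longrightarrow> j < n \<Longrightarrow> i = j" for i j
    using fb(3) lb by (simp add: nth_eq_iff_index_eq)
  have ad: "a ! i = a ! j \<Longrightarrow> i < m \<Longrightarrow> j < m \<Longrightarrow> i = j" for i j
    using fa(3) la by (simp add: nth_eq_iff_index_eq)
  have ex1: "\<exists>i. i < length a \<and> a ! i = 1" using fa(4) la m
    by (metis atLeastAtMost_iff in_set_conv_nth order_refl)
  define k0 where "k0 = (LEAST i. i < length a \<and> a ! i = 1)"
  have k0: "k0 < m" "a ! k0 = 1" using LeastI_ex[OF ex1] la unfolding k0_def[symmetric] by auto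
  have a1: "a ! i \<noteq> 1" if "i < m" "i \<noteq> k0" for i using ad[of i k0] k0 that by auto
  define k where "k = Suc k0"
  have km: "k \<le> m" "1 \<le> k" using k0 by (auto simp: k_def)
  define w where "w = map (\<lambda>x. x + n) (take k a) @ b @ map (\<lambda>x. x + n) (drop k a)"
  have odw: "odot a b = w" unfolding odot_def Let_def w_def k_def k0_def lb ..
  have wlen: "length w = N" unfolding w_def N_def using la lb km by simp
  have wA: "w ! i = a ! i + n" if "i < k" for i
    using that km la unfolding w_def by (simp add: nth_append)
  have wB: "w ! i = b ! (i - k)" if "k \<le> i" "i < k + n" for i
  proof -
    have "i - k < n" using that by simp
    then show ?thesis using that km la lb unfolding w_def by (simp add: nth_append)
  qed
  have wC: "w ! i = a ! (i - n) + n" if "k + n \<le> i" "i < N" for i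
  proof -
    have "\<not> i - k < n" using that by simp
    then have "w ! i = map (\<lambda>x. x + n) (drop k a) ! (i - k - n)"
      using that km la lb unfolding w_def by (simp add: nth_append)
    also have "\<dots> = a ! (i - n) + n" using that km la unfolding N_def by simp
    finally show ?thesis .
  qed
  have setw: "set w = {1..N}"
  proof -
    have "set (take k a) \<union> set (drop k a) = set a"
      by (metis append_take_drop_id set_append)
    then have "set w = (\<lambda>x. x + n) ` set a \<union> set b" unfolding w_def by auto
    then show ?thesis using fa(4) fb(4) shift_union N_def by simp
  qed
  define F0 where "F0 x = (if x \<le> n then (if h x = n then g 1 + n else h x)
      else if x = Suc n then n else g (x - n) + n)" for x
  have key: "F0 (w ! i) = w ! (Suc i mod N)" if i: "i < N" for i
  proof -
    consider (c1) "Suc i < k" | (c2) "Suc i = k" | (c3) "k \<le> i" "Suc i < k + n"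
      | (c4) "Suc i = k + n" | (c5) "k + n \<le> i" by linarith
    then show ?thesis
    proof cases
      case c1
      have "i < m" "i \<noteq> k0" using c1 km k_def by auto
      then have r: "a ! i \<noteq> 1" "1 \<le> a ! i" using a1 ar by auto
      have "Suc i < m" using c1 km by simp
      then have "F0 (w ! i) = a ! Suc i + n" using r wA[of i] c1 gsuc[of i] unfolding F0_def by simp
      moreover have "Suc i mod N = Suc i" using c1 km unfolding N_def by simp
      ultimately show ?thesis using wA[OF c1] by simp
    next
      case c2
      then have "w ! i = Suc n" using wA[of i] k0 k_def by simp
      then have "F0 (w ! i) = n" unfolding F0_def by simp
      moreover have "Suc i mod N = k" using c2 km n unfolding N_def by simp
      moreover have "w ! k = n" using wB[of k] b0 n by simp
      ultimately show ?thesis by simp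
    next
      case c3
      have r: "b ! (i - k) \<le> n" using br c3 by auto
      have hs: "h (b ! (i - k)) = b ! Suc (i - k)" using hsuc c3 by simp
      have "Suc (i - k) < n" using c3 by simp
      then have "b ! Suc (i - k) \<noteq> b ! 0" using bd[of "Suc (i - k)" 0] n by auto
      then have "h (b ! (i - k)) \<noteq> n" using hs b0 by simp
      then have "F0 (w ! i) = b ! Suc (i - k)" using r hs wB[of i] c3 unfolding F0_def by simp
      moreover have "Suc i mod N = Suc i" using c3 unfolding N_def using km by simp
      moreover have "w ! Suc i = b ! Suc (i - k)" using wB[of "Suc i"] c3 by (simp add: Suc_diff_le)
      ultimately show ?thesis by simp
    next
      case c4
      have "i - k = n - 1" using c4 n by simp
      then have wi: "w ! i = b ! (n - 1)" using wB[of i] c4 n by simp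
      have "b ! (n - 1) \<le> n" using br n by simp
      then have F: "F0 (w ! i) = g 1 + n" using wi hlast unfolding F0_def by simp
      show ?thesis
      proof (cases "k < m")
        case True
        have "Suc i mod N = k + n" using c4 True unfolding N_def by simp
        moreover have "w ! (k + n) = a ! k + n" using wC[of "k + n"] True unfolding N_def by simp
        moreover have "a ! k = g 1" using gsuc[of k0] k0 True k_def by simp
        ultimately show ?thesis using F by simp
      next
        case False
        then have "k = m" using km by simp
        then have "Suc i mod N = 0" using c4 unfolding N_def by (simp add: add.commute)
        moreover have "w ! 0 = m + n" using wA[of 0] km a0 by simp
        moreover have "g 1 = m"
        proof -
          have "m - 1 = k0" using \<open>k = m\<close> k_def by simp
          then show ?thesis using glast k0 by simp
        qed
        ultimately show ?thesis using F by simp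
      qed
    next
      case c5
      have wi: "w ! i = a ! (i - n) + n" using wC c5 i by simp
      have "i - n < m" "i - n \<noteq> k0" using c5 i k_def unfolding N_def by auto
      then have r: "a ! (i - n) \<noteq> 1" "1 \<le> a ! (i - n)" using a1 ar by auto
      then have F: "F0 (w ! i) = g (a ! (i - n)) + n" using wi unfolding F0_def by simp
      show ?thesis
      proof (cases "Suc i < N")
        case True
        have "Suc (i - n) < m" using True c5 unfolding N_def by simp
        then have "g (a ! (i - n)) = a ! Suc (i - n)" using gsuc by simp
        moreover have "w ! Suc i = a ! Suc (i - n) + n" using wC[of "Suc i"] True c5
          by (simp add: Suc_diff_le)
        ultimately show ?thesis using F True by simp
      next
        case False
        then have "Suc i = N" using i by simp
        then have "i - n = m - 1" unfolding N_def by simp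
        then have "g (a ! (i - n)) = m" using glast by simp
        moreover have "w ! 0 = m + n" using wA[of 0] km a0 by simp
        ultimately show ?thesis using F \<open>Suc i = N\<close> by simp
      qed
    qed
  qed
  define P where "P = map F0 [1..<Suc N]"
  have lP: "length P = N" unfolding P_def by simp
  have pP: "papp P x = F0 x" if "x \<in> {1..N}" for x
  proof -
    have u: "[1..<Suc N] ! (x - 1) = x" using that by (simp del: upt_Suc add: nth_upt)
    have "x - 1 < length [1..<Suc N]" using that by (auto simp del: upt_Suc)
    then have "P ! (x - 1) = F0 ([1..<Suc N] ! (x - 1))" unfolding P_def
      by (rule nth_map)
    then show ?thesis using that u unfolding papp_def lP by simp
  qed
  have w0: "w ! 0 = N" using wA[of 0] km a0 unfolding N_def by simp
  have iter: "(papp P ^^ i) N = w ! i" if "i < N" for i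
    using that
  proof (induction i)
    case 0 then show ?case using w0 by simp
  next
    case (Suc i)
    have wi: "w ! i \<in> {1..N}" using Suc.prems wlen setw by (metis Suc_lessD nth_mem)
    have "(papp P ^^ Suc i) N = papp P (w ! i)" using Suc by simp
    also have "\<dots> = F0 (w ! i)" using pP wi by simp
    also have "\<dots> = w ! (Suc i mod N)" using key Suc.prems by simp
    finally show ?case using Suc.prems by simp
  qed
  have imF: "F0 ` {1..N} = {1..N}"
  proof
    show "F0 ` {1..N} \<subseteq> {1..N}"
    proof
      fix y assume "y \<in> F0 ` {1..N}"
      then obtain x where x: "x \<in> {1..N}" "y = F0 x" by blast
      then obtain i where "i < N" "x = w ! i" using setw wlen by (metis in_set_conv_nth)
      then have "y = w ! (Suc i mod N)" using key x by simp
      moreover have "Suc i mod N < N" using \<open>i < N\<close> by simp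
      ultimately show "y \<in> {1..N}" using setw wlen by (metis nth_mem)
    qed
  next
    show "{1..N} \<subseteq> F0 ` {1..N}"
    proof
      fix y assume "y \<in> {1..N}"
      then obtain j where j: "j < N" "y = w ! j" using setw wlen by (metis in_set_conv_nth)
      define i where "i = (if j = 0 then N - 1 else j - 1)"
      have i: "i < N" "Suc i mod N = j" using j unfolding i_def by auto
      have "y = F0 (w ! i)" using key[OF i(1)] i j by simp
      moreover have "w ! i \<in> {1..N}" using setw wlen i by (metis nth_mem)
      ultimately show "y \<in> F0 ` {1..N}" by blast
    qed
  qed
  have "set [1..<Suc N] = {1..N}" by (simp only: set_upt atLeastLessThanSuc_atLeastAtMost)
  then have setP: "set P = {1..N}" unfolding P_def using imF by (simp only: set_map)
  have PP: "P \<in> perms N" unfolding perms_def using lP setP by (simp add: card_distinct)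
  have N1: "1 \<le> N" using n unfolding N_def by simp
  have dw: "distinct w" using setw wlen by (simp add: card_distinct)
  have D: "inj_on (\<lambda>i. (papp P ^^ i) N) {..<N}"
    using dw wlen iter unfolding inj_on_def by (simp add: nth_eq_iff_index_eq)
  have cyP: "cyclic P" by (rule orbit_main(3)[OF PP N1 D])
  have thP: "theta P = w"
    unfolding orbit_main(4)[OF PP N1 D]
    by (rule nth_equalityI) (simp_all add: wlen iter)
  have Pn: "P ! i = F0 (Suc i)" if "i < N" for i
  proof -
    have "i < length [1..<Suc N]" using that by (auto simp del: upt_Suc)
    then have "P ! i = F0 ([1..<Suc N] ! i)" unfolding P_def by (rule nth_map)
    moreover have "[1..<Suc N] ! i = Suc i" using that by (simp del: upt_Suc add: nth_upt)
    ultimately show ?thesis by simp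
  qed
  have g1: "g 1 = \<tau> ! 0" unfolding g_def papp_def lt using m by simp
  have P1: "\<forall>i<n. P ! i = (if \<sigma> ! i = n then \<tau> ! 0 + n else \<sigma> ! i)"
  proof (intro allI impI)
    fix i assume i: "i < n"
    have "P ! i = F0 (Suc i)" using i Pn by (simp add: N_def)
    moreover have "h (Suc i) = \<sigma> ! i" unfolding h_def papp_def ls using i by simp
    ultimately show "P ! i = (if \<sigma> ! i = n then \<tau> ! 0 + n else \<sigma> ! i)"
      using i g1 unfolding F0_def by simp
  qed
  have P2: "\<forall>i. n \<le> i \<and> i < n + m \<longrightarrow> P ! i = (if i = n then n else \<tau> ! (i - n) + n)"
  proof (intro allI impI)
    fix i assume i: "n \<le> i \<and> i < n + m"
    have "P ! i = F0 (Suc i)" using i Pn by (simp add: N_def)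
    moreover have "i \<noteq> n \<Longrightarrow> g (Suc i - n) = \<tau> ! (i - n)"
    proof -
      have "Suc (i - n) \<le> m" using i by arith
      then show ?thesis unfolding g_def papp_def lt using i by (simp add: Suc_diff_le)
    qed
    ultimately show "P ! i = (if i = n then n else \<tau> ! (i - n) + n)"
      using i unfolding F0_def by auto
  qed
  have nc: "\<not> contains321 P"
    by (rule avoid[OF sc(2) tc(2) sc(3) tc(3) n _ P1 P2]) (simp add: lP N_def)
  have "P \<in> Cyc321 (n + m)" using PP cyP nc unfolding Cyc321_def Cyc_def N_def by simp
  moreover have "theta P = odot (theta \<tau>) (theta \<sigma>)" using thP odw a_def b_def by simp
  ultimately show ?thesis by blast
qed

lemma theta_inv_eq:
  assumes P: "P \<in> Cyc N" and N: "1 \<le> N"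
  shows "theta_inv N (theta P) = P"
proof -
  note f = cyc_facts[OF P N]
  have PP: "P \<in> perms N" using P by (simp add: Cyc_def)
  have w0: "theta P ! 0 = N" using f(1) N by simp
  show ?thesis unfolding theta_inv_def the_inv_into_def
  proof (rule the_equality)
    show "P \<in> perms N \<and> theta P = theta P" using PP by simp
    fix Q assume Q: "Q \<in> perms N \<and> theta Q = theta P"
    have EQ: "\<forall>i<N. (papp Q ^^ i) N = theta P ! i"
      by (rule theta_start[OF conjunct1[OF Q] N conjunct2[OF Q] f(5) w0])
    have EP: "\<forall>i<N. (papp P ^^ i) N = theta P ! i"
      by (rule theta_start[OF PP N refl f(5) w0])
    have DQ: "inj_on (\<lambda>i. (papp Q ^^ i) N) {..<N}"
      using EQ f(3) f(5) unfolding inj_on_def by (simp add: nth_eq_iff_index_eq)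
    show "Q = P" by (rule determined[OF conjunct1[OF Q] PP N DQ]) (use EQ EP in simp)
  qed
qed

lemma theta_det:
  assumes p: "p \<in> Cyc N" and q: "q \<in> Cyc N" and N: "1 \<le> N" and e: "theta p = theta q"
  shows "p = q"
proof -
  have E: "\<forall>i<N. (papp p ^^ i) N = (papp q ^^ i) N"
  proof (intro allI impI)
    fix i assume i: "i < N"
    have "theta p ! i = theta q ! i" using e by simp
    then show "(papp p ^^ i) N = (papp q ^^ i) N"
      using cyc_facts(1)[OF p N] cyc_facts(1)[OF q N] i by simp
  qed
  have pp: "p \<in> perms N" "q \<in> perms N" using p q by (auto simp: Cyc_def)
  show ?thesis by (rule determined[OF pp N cyc_inj[OF p N] E])
qed

lemma odot_split:
  assumes "length b = n"
  shows "odot a b = map (\<lambda>x. x + n) (take (Suc (LEAST i. i < length a \<and> a ! i = 1)) a) @ b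
     @ map (\<lambda>x. x + n) (drop (Suc (LEAST i. i < length a \<and> a ! i = 1)) a)"
  unfolding odot_def Let_def assms ..

lemma tw:
  assumes lb: "length b = n" and b0: "b ! 0 = n" and n: "1 \<le> n" and pos: "\<forall>x\<in>set a. 1 \<le> x"
  shows "takeWhile (\<lambda>x. n < x) (map (\<lambda>x. x + n) (take k a) @ b @ Y) = map (\<lambda>x. x + n) (take k a)"
proof -
  have h1: "\<forall>x\<in>set (map (\<lambda>x. x + n) (take k a)). n < x" using pos
    by (auto dest!: in_set_takeD)
  have h2: "b @ Y = n # (tl b @ Y)" using lb b0 n by (cases b) auto
  have "takeWhile (\<lambda>x. n < x) (map (\<lambda>x. x + n) (take k a) @ (b @ Y))
     = map (\<lambda>x. x + n) (take k a) @ takeWhile (\<lambda>x. n < x) (b @ Y)"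
    by (rule takeWhile_append2) (use h1 in blast)
  moreover have "takeWhile (\<lambda>x. n < x) (b @ Y) = []" by (simp only: h2) simp
  ultimately show ?thesis by simp
qed

lemma odot_inj:
  assumes lb: "length b = n" "length b' = n" and b0: "b ! 0 = n" "b' ! 0 = n" and n: "1 \<le> n"
    and pos: "\<forall>x\<in>set a. 1 \<le> x" "\<forall>x\<in>set a'. 1 \<le> x"
    and e: "odot a b = odot a' b'"
  shows "a = a' \<and> b = b'"
proof -
  define k where "k = Suc (LEAST i. i < length a \<and> a ! i = 1)"
  define k' where "k' = Suc (LEAST i. i < length a' \<and> a' ! i = 1)"
  have e2: "map (\<lambda>x. x + n) (take k a) @ b @ map (\<lambda>x. x + n) (drop k a)
      = map (\<lambda>x. x + n) (take k' a') @ b' @ map (\<lambda>x. x + n) (drop k' a')"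
    using e unfolding odot_split[OF lb(1)] odot_split[OF lb(2)] k_def k'_def .
  have X: "map (\<lambda>x. x + n) (take k a) = map (\<lambda>x. x + n) (take k' a')"
    using tw[OF lb(1) b0(1) n pos(1), of k "map (\<lambda>x. x + n) (drop k a)"]
      tw[OF lb(2) b0(2) n pos(2), of k' "map (\<lambda>x. x + n) (drop k' a')"] e2 by simp
  then have r: "b @ map (\<lambda>x. x + n) (drop k a) = b' @ map (\<lambda>x. x + n) (drop k' a')"
    using e2 by simp
  then have bb: "b = b'" and Y: "map (\<lambda>x. x + n) (drop k a) = map (\<lambda>x. x + n) (drop k' a')"
    using lb by (simp_all add: append_eq_append_conv)
  have inj: "inj (\<lambda>x::nat. x + n)" by (simp add: inj_on_def)
  have "take k a = take k' a'" "drop k a = drop k' a'" using X Y inj by simp_all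
  then have "a = a'" by (metis append_take_drop_id)
  then show ?thesis using bb by simp
qed

lemma finite_perms: "finite (perms N)"
proof -
  have "perms N \<subseteq> {xs. set xs \<subseteq> {1..N} \<and> length xs = N}" unfolding perms_def by auto
  moreover have "finite {xs. set xs \<subseteq> {1..N} \<and> length xs = N}"
    by (rule finite_lists_length_eq) simp
  ultimately show ?thesis by (rule finite_subset)
qed

theorem mainTheorem8:
  fixes n m :: nat
  assumes "1 \<le> n" and "1 \<le> m"
  shows "cnum n * cnum m \<le> cnum (n + m)
    \<and> (\<lambda>(\<tau>, \<sigma>). theta_inv (n + m) (odot (theta \<tau>) (theta \<sigma>))) ` (Cyc321 m \<times> Cyc321 n) \<subseteq> Cyc321 (n + m)
    \<and> inj_on (\<lambda>(\<tau>, \<sigma>). theta_inv (n + m) (odot (theta \<tau>) (theta \<sigma>))) (Cyc321 m \<times> Cyc321 n)"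
proof -
  let ?F = "\<lambda>(\<tau>, \<sigma>). theta_inv (n + m) (odot (theta \<tau>) (theta \<sigma>))"
  have N1: "1 \<le> n + m" using assms by simp
  have core: "?F (\<tau>, \<sigma>) \<in> Cyc321 (n + m) \<and> theta (?F (\<tau>, \<sigma>)) = odot (theta \<tau>) (theta \<sigma>)"
    if t: "\<tau> \<in> Cyc321 m" and s: "\<sigma> \<in> Cyc321 n" for \<tau> \<sigma>
  proof -
    obtain P where P: "P \<in> Cyc321 (n + m)" "theta P = odot (theta \<tau>) (theta \<sigma>)"
      using construct[OF assms t s] by blast
    have "P \<in> Cyc (n + m)" using P(1) by (simp add: Cyc321_def)
    then have "theta_inv (n + m) (theta P) = P" by (rule theta_inv_eq[OF _ N1])
    then have "?F (\<tau>, \<sigma>) = P" using P(2) by simp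
    then show ?thesis using P by simp
  qed
  have sub: "?F ` (Cyc321 m \<times> Cyc321 n) \<subseteq> Cyc321 (n + m)" using core by auto
  have inj: "inj_on ?F (Cyc321 m \<times> Cyc321 n)"
  proof (rule inj_onI)
    fix x y assume x: "x \<in> Cyc321 m \<times> Cyc321 n" and y: "y \<in> Cyc321 m \<times> Cyc321 n"
      and exy: "?F x = ?F y"
    obtain t s where ts: "x = (t, s)" "t \<in> Cyc321 m" "s \<in> Cyc321 n" using x by auto
    obtain t' s' where ts': "y = (t', s')" "t' \<in> Cyc321 m" "s' \<in> Cyc321 n" using y by auto
    have c: "t \<in> Cyc m" "t' \<in> Cyc m" "s \<in> Cyc n" "s' \<in> Cyc n"
      using ts ts' by (auto simp: Cyc321_def)
    have "odot (theta t) (theta s) = odot (theta t') (theta s')"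
      using core[OF ts(2,3)] core[OF ts'(2,3)] exy ts ts' by metis
    moreover have "length (theta s) = n" "length (theta s') = n"
      using cyc_facts(5) c assms by auto
    moreover have "theta s ! 0 = n" "theta s' ! 0 = n"
      using cyc_facts(1)[OF c(3) assms(1)] cyc_facts(1)[OF c(4) assms(1)] assms(1) by simp_all
    moreover have "\<forall>x\<in>set (theta t). 1 \<le> x" "\<forall>x\<in>set (theta t'). 1 \<le> x"
      using cyc_facts(4)[OF c(1) assms(2)] cyc_facts(4)[OF c(2) assms(2)] by auto
    ultimately have "theta t = theta t' \<and> theta s = theta s'"
      using odot_inj assms(1) by blast
    then have "t = t'" "s = s'"
      using theta_det[OF c(1) c(2) assms(2)] theta_det[OF c(3) c(4) assms(1)] by auto
    then show "x = y" using ts ts' by simp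
  qed
  have fin: "finite (Cyc321 (n + m))"
    by (rule finite_subset[OF _ finite_perms[of "n + m"]]) (auto simp: Cyc321_def Cyc_def)
  have "card (Cyc321 m \<times> Cyc321 n) \<le> card (Cyc321 (n + m))"
    by (rule card_inj_on_le[OF inj sub fin])
  then have "cnum n * cnum m \<le> cnum (n + m)"
    unfolding cnum_def by (simp add: card_cartesian_product mult.commute)
  then show ?thesis using sub inj by blast
qed

end
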